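(* Let $n$ be a positive square-free odd integer. The following are equivalent: (1) there is a positive integer $k$ such that a square with rational side length can be dissected into $2nk^2$ congruent almost rational right triangles; (2) $2n$ is $\pi/4$-congruent or $3\pi/4$-congruent.
   Context: A dissection (tiling) of a polygon $P$ is a decomposition of $P$ into finitely many pairwise non-overlapping polygons whose union is $P$. A right triangle is called almost rational if its perpendicular sides have rational lengths $a$ and $b$ such that $a^2 + 2b^2 + 2ab$ or $a^2 + 2b^2 - 2ab$ is the square of a rational number. For $\theta \in \{\pi/4,3\pi/4\}$, a positive integer $n$ is $\theta$-congruent if there exist positive rationals $a,b,c$ such that the triangle with sides $a$, $b\sqrt2$, $c$ has angle $\theta$ opposite $c$ and area $n$; equivalently $ab = 2n$ and $c^2 = a^2+2b^2-2ab$ (for $\theta = \pi/4$), resp. $c^2 = a^2+2b^2+2ab$ (for $\theta=3\pi/4$). *)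

theory Defs
  imports "HOL-Analysis.Analysis" "HOL-Computational_Algebra.Squarefree"
begin

definition plane_isometry :: "(complex \<Rightarrow> complex) \<Rightarrow> bool" where
  "plane_isometry f \<longleftrightarrow> (\<forall>x y. dist (f x) (f y) = dist x y)"

definition congruent_sets :: "complex set \<Rightarrow> complex set \<Rightarrow> bool" where
  "congruent_sets A B \<longleftrightarrow> (\<exists>f. plane_isometry f \<and> f ` B = A)"

definition almost_rational_right_triangle :: "complex set \<Rightarrow> bool" where
  "almost_rational_right_triangle T \<longleftrightarrow>
     (\<exists>a b::real. a > 0 \<and> b > 0 \<and> a \<in> \<rat> \<and> b \<in> \<rat> \<and>
        ((\<exists>c\<in>\<rat>. a^2 + 2*b^2 + 2*a*b = c^2) \<or> (\<exists>c\<in>\<rat>. a^2 + 2*b^2 - 2*a*b = c^2)) \<and>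
        congruent_sets T (convex hull {0, complex_of_real a, \<i> * complex_of_real b}))"

definition rational_square :: "complex set \<Rightarrow> bool" where
  "rational_square S \<longleftrightarrow>
     (\<exists>s f. s \<in> \<rat> \<and> s > 0 \<and> plane_isometry f \<and>
        S = f ` {z. 0 \<le> Re z \<and> Re z \<le> s \<and> 0 \<le> Im z \<and> Im z \<le> s})"

definition dissection :: "complex set \<Rightarrow> (nat \<Rightarrow> complex set) \<Rightarrow> nat \<Rightarrow> bool" where
  "dissection P t N \<longleftrightarrow>
     (\<Union>i<N. t i) = P \<and> (\<forall>i<N. \<forall>j<N. i \<noteq> j \<longrightarrow> interior (t i) \<inter> interior (t j) = {})"

definition pi4_congruent :: "nat \<Rightarrow> bool" where
  "pi4_congruent m \<longleftrightarrow> (\<exists>a b c::rat. a > 0 \<and> b > 0 \<and> c > 0 \<and>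
      a * b = 2 * of_nat m \<and> c^2 = a^2 + 2*b^2 - 2*a*b)"

definition three_pi4_congruent :: "nat \<Rightarrow> bool" where
  "three_pi4_congruent m \<longleftrightarrow> (\<exists>a b c::rat. a > 0 \<and> b > 0 \<and> c > 0 \<and>
      a * b = 2 * of_nat m \<and> c^2 = a^2 + 2*b^2 + 2*a*b)"

end

theory Submission
  imports Defs
begin



definition E2 :: "real^2 \<Rightarrow> complex" where "E2 x = Complex (x$1) (x$2)"
definition F2 :: "complex \<Rightarrow> real^2" where "F2 z = (\<chi> i. if i = 1 then Re z else Im z)"

lemma F2_nth[simp]: "F2 z $ 1 = Re z" "F2 z $ 2 = Im z"
  by (auto simp: F2_def)

lemma E2_F2[simp]: "E2 (F2 z) = z" by (simp add: E2_def complex_eq_iff)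
lemma F2_E2[simp]: "F2 (E2 x) = x"
proof (subst vec_eq_iff, intro allI)
  fix i :: 2
  show "F2 (E2 x) $ i = x $ i" using exhaust_2[of i] by (auto simp: F2_def E2_def)
qed

lemma E2_vimage: "E2 -` A = F2 ` A"
proof (intro set_eqI iffI)
  fix x assume "x \<in> E2 -` A"
  then show "x \<in> F2 ` A" by (intro image_eqI[of x F2 "E2 x"]) auto
next
  fix x assume "x \<in> F2 ` A"
  then show "x \<in> E2 -` A" by auto
qed

lemma E2_meas[measurable]: "E2 \<in> borel_measurable borel"
  unfolding E2_def by (intro borel_measurable_continuous_onI continuous_intros) 

lemma distr_E2: "distr lborel borel E2 = lborel"
proof (rule lborel_eqI[symmetric])
  fix l u :: complex
  assume le: "\<And>b. b \<in> Basis \<Longrightarrow> l \<bullet> b \<le> u \<bullet> b"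
  have "E2 -` box l u = box (F2 l) (F2 u)"
    by (auto simp: mem_box_cart in_box_complex_iff E2_def forall_2)
  have "emeasure (distr lborel borel E2) (box l u) = emeasure lborel (box (F2 l) (F2 u))"
    by (subst emeasure_distr) (auto simp: \<open>E2 -` box l u = _\<close>)
  also have "\<dots> = emeasure lborel (cbox (F2 l) (F2 u))"
    by (simp add: emeasure_lborel_box_eq emeasure_lborel_cbox_eq)
  also have "\<dots> = (Re u - Re l) * (Im u - Im l)"
  proof -
    have ne: "cbox (F2 l) (F2 u) \<noteq> {}"
      using le[of 1] le[of \<i>] by (auto simp: interval_ne_empty_cart forall_2 Basis_complex_def)
    have "Henstock_Kurzweil_Integration.content (cbox (F2 l) (F2 u)) = (Re u - Re l) * (Im u - Im l)"
      using content_cbox_cart[OF ne] by (simp add: UNIV_2)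
    then show ?thesis
      using emeasure_lborel_cbox_finite[of "F2 l" "F2 u"] by (subst emeasure_eq_ennreal_measure) auto
  qed
  also have "\<dots> = (\<Prod>b\<in>Basis. (u - l) \<bullet> b)"
    by (simp add: Basis_complex_def)
  finally show "emeasure (distr lborel borel E2) (box l u) = (\<Prod>b\<in>Basis. (u - l) \<bullet> b)" .
qed simp

lemma F2_norm: "norm (F2 z) = norm z"
  by (simp add: norm_vec_def L2_set_def UNIV_2 cmod_def)

lemma F2_diff: "F2 z - F2 w = F2 (z - w)"
  by (simp add: vec_eq_iff F2_def)

lemma F2_dist: "dist (F2 z) (F2 w) = dist z w"
  by (simp add: dist_norm F2_diff F2_norm)

lemma F2_zero[simp]: "F2 0 = 0"
  by (simp add: vec_eq_iff F2_def)

lemma measure_F2: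
  assumes A: "A \<in> sets borel"
  shows "measure lebesgue (F2 ` A) = measure lebesgue A"
proof -
  have EA: "E2 -` A \<in> sets borel" by (rule measurable_sets_borel[OF E2_meas A])
  have "measure lebesgue A = measure lborel A"
    by (rule measure_completion) (simp add: A)
  also have "\<dots> = measure (distr lborel borel E2) A"
    by (simp only: distr_E2)
  also have "\<dots> = measure lborel (E2 -` A \<inter> space lborel)"
    by (rule measure_distr) (simp_all add: A)
  also have "\<dots> = measure lborel (E2 -` A)" by simp
  also have "\<dots> = measure lebesgue (E2 -` A)"
    by (rule measure_completion[symmetric]) (simp add: EA)
  finally show ?thesis by (simp only: E2_vimage)
qed

lemma measure_orth_complex:
  fixes h :: "complex \<Rightarrow> complex"
  assumes h: "orthogonal_transformation h" and A: "compact A"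
  shows "measure lebesgue (h ` A) = measure lebesgue A"
proof -
  define h' where "h' = (\<lambda>x. F2 (h (E2 x)))"
  have h0: "h 0 = 0" and hd: "\<And>x y. dist (h x) (h y) = dist x y"
    using h by (auto simp: orthogonal_transformation_isometry)
  have "orthogonal_transformation h'"
    unfolding orthogonal_transformation_isometry h'_def
  proof (intro conjI allI)
    have e0: "E2 0 = 0" by (simp add: E2_def complex_eq_iff)
    show "F2 (h (E2 0)) = 0" by (simp only: e0 h0 F2_zero)
    fix x y
    have "dist (F2 (h (E2 x))) (F2 (h (E2 y))) = dist (E2 x) (E2 y)" by (simp add: F2_dist hd)
    also have "\<dots> = dist (F2 (E2 x)) (F2 (E2 y))" by (simp only: F2_dist)
    finally show "dist (F2 (h (E2 x))) (F2 (h (E2 y))) = dist x y" by simp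
  qed
  moreover have "compact (F2 ` A)"
  proof (intro compact_continuous_image A)
    show "continuous_on A F2" unfolding F2_def
    proof (rule continuous_on_vec_lambda)
      fix i :: 2
      show "continuous_on A (\<lambda>x. if i = 1 then Re x else Im x)"
        by (cases "i = 1") (auto intro: continuous_intros)
    qed
  qed
  ultimately have "measure lebesgue (h' ` (F2 ` A)) = measure lebesgue (F2 ` A)"
    by (intro measure_orthogonal_image lmeasurable_compact)
  moreover have "h' ` (F2 ` A) = F2 ` (h ` A)"
    by (auto simp: h'_def image_iff)
  moreover have "compact (h ` A)"
    using h A by (intro compact_continuous_image linear_continuous_on) (auto simp: orthogonal_transformation_linear linear_conv_bounded_linear[symmetric])
  ultimately show ?thesis
    using A by (simp add: measure_F2 compact_imp_closed borel_closed)
qed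

lemma isom_orth:
  assumes "plane_isometry f"
  shows "orthogonal_transformation (\<lambda>x. f x - f 0)"
  using assms unfolding orthogonal_transformation_isometry plane_isometry_def
  by (simp add: dist_norm)

lemma isom_image:
  assumes f: "plane_isometry f" and A: "compact A"
  shows "compact (f ` A)" "measure lebesgue (f ` A) = measure lebesgue A"
    "convex A \<Longrightarrow> convex (f ` A)"
proof -
  define h where "h = (\<lambda>x. f x - f 0)"
  have h: "orthogonal_transformation h" using isom_orth[OF f] by (simp add: h_def)
  have lin: "linear h" using h by (simp add: orthogonal_transformation_linear)
  have eq: "f ` A = (+) (f 0) ` (h ` A)"
    by (auto simp: h_def image_iff)
  have ch: "compact (h ` A)"
    using lin A by (intro compact_continuous_image linear_continuous_on) (auto simp: linear_conv_bounded_linear)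
  show "compact (f ` A)" unfolding eq
    by (intro compact_continuous_image ch continuous_intros)
  show "measure lebesgue (f ` A) = measure lebesgue A"
    unfolding eq measure_translation using measure_orth_complex[OF h A] .
  show "convex (f ` A)" if "convex A"
    unfolding eq by (intro convex_translation convex_linear_image lin that)
qed

lemma plane_isometry_translate: "plane_isometry (\<lambda>z. z + c)"
  by (simp add: plane_isometry_def dist_norm)

lemma plane_isometry_reflect: "plane_isometry (\<lambda>z. c - z)"
  by (simp add: plane_isometry_def dist_norm norm_minus_commute)

lemma plane_isometry_id: "plane_isometry id"
  by (simp add: plane_isometry_def)

lemma plane_isometry_comp: "plane_isometry f \<Longrightarrow> plane_isometry g \<Longrightarrow> plane_isometry (f \<circ> g)"
  by (simp add: plane_isometry_def)

definition tri :: "real \<Rightarrow> real \<Rightarrow> complex set" where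
  "tri a b = {z. 0 \<le> Re z \<and> 0 \<le> Im z \<and> Re z * b + Im z * a \<le> a * b}"

lemma hull_tri:
  assumes a: "a > 0" and b: "b > 0"
  shows "convex hull {0, complex_of_real a, \<i> * complex_of_real b} = tri a b"
proof
  have eq: "tri a b = {z. 1 \<bullet> z \<ge> 0} \<inter> {z. \<i> \<bullet> z \<ge> 0} \<inter> {z. Complex b a \<bullet> z \<le> a * b}"
    by (auto simp: tri_def inner_complex_def mult.commute)
  have "convex (tri a b)"
    unfolding eq by (intro convex_Int convex_halfspace_le convex_halfspace_ge)
  moreover have "{0, complex_of_real a, \<i> * complex_of_real b} \<subseteq> tri a b"
    using a b by (auto simp: tri_def)
  ultimately show "convex hull {0, complex_of_real a, \<i> * complex_of_real b} \<subseteq> tri a b"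
    by (metis hull_minimal)
next
  show "tri a b \<subseteq> convex hull {0, complex_of_real a, \<i> * complex_of_real b}"
  proof
    fix z assume z: "z \<in> tri a b"
    define v where "v = Re z / a"
    define w where "w = Im z / b"
    have "v + w \<le> 1"
      using z a b by (simp add: tri_def v_def w_def field_simps)
    moreover have "v \<ge> 0" "w \<ge> 0" using z a b by (auto simp: tri_def v_def w_def)
    moreover have "z = (1 - v - w) *\<^sub>R 0 + v *\<^sub>R complex_of_real a + w *\<^sub>R (\<i> * complex_of_real b)"
      using a b by (simp add: complex_eq_iff v_def w_def)
    ultimately show "z \<in> convex hull {0, complex_of_real a, \<i> * complex_of_real b}"
      unfolding convex_hull_3 by (intro CollectI exI[of _ "1 - v - w"] exI[of _ v] exI[of _ w]) auto
  qed
qed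

lemma tri_bounds:
  assumes a: "a > 0" and b: "b > 0" and z: "z \<in> tri a b"
  shows "Re z \<le> a" "Im z \<le> b"
proof -
  have z1: "0 \<le> Re z" "0 \<le> Im z" "Re z * b + Im z * a \<le> a * b" using z by (auto simp: tri_def)
  have "0 \<le> Im z * a" "0 \<le> Re z * b" using z1 a b by auto
  then have "Re z * b \<le> a * b" "Im z * a \<le> b * a" using z1 by (auto simp: algebra_simps)
  then show "Re z \<le> a" "Im z \<le> b" using a b by (auto intro: mult_right_le_imp_le)
qed

lemma compact_tri: 
  assumes a: "a > 0" and b: "b > 0"
  shows "compact (tri a b)"
proof -
  have "tri a b \<subseteq> cball 0 (a + b)"
  proof
    fix z assume z: "z \<in> tri a b"
    have "norm z \<le> \<bar>Re z\<bar> + \<bar>Im z\<bar>" by (rule cmod_le)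
    also have "\<dots> \<le> a + b" using tri_bounds[OF a b z] z by (auto simp: tri_def)
    finally show "z \<in> cball 0 (a + b)" by simp
  qed
  moreover have "closed (tri a b)"
    unfolding tri_def by (intro closed_Collect_conj closed_Collect_le continuous_intros)
  ultimately show ?thesis unfolding compact_eq_bounded_closed using bounded_subset[OF bounded_cball] by blast
qed




lemma refl_tri:
  assumes a: "a > 0" and b: "b > 0"
  shows "(\<lambda>z. Complex a b - z) ` tri a b = {z. Re z \<le> a \<and> Im z \<le> b \<and> a * b \<le> Re z * b + Im z * a}"
proof -
  have "z \<in> (\<lambda>z. Complex a b - z) ` tri a b" if "Re z \<le> a \<and> Im z \<le> b \<and> a * b \<le> Re z * b + Im z * a" for z
  proof (rule image_eqI[of _ _ "Complex a b - z"])
    show "Complex a b - z \<in> tri a b" using that by (auto simp: tri_def algebra_simps)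
  qed simp
  moreover have "Complex a b - z \<in> {z. Re z \<le> a \<and> Im z \<le> b \<and> a * b \<le> Re z * b + Im z * a}"
    if "z \<in> tri a b" for z
    using that by (auto simp: tri_def algebra_simps)
  ultimately show ?thesis by blast
qed

lemma tri_area:
  assumes a: "a > 0" and b: "b > 0"
  shows "measure lebesgue (tri a b) = a * b / 2"
proof -
  define T' where "T' = (\<lambda>z. Complex a b - z) ` tri a b"
  have cT: "compact (tri a b)" using compact_tri[OF a b] .
  have cT': "compact T'" and mT': "measure lebesgue T' = measure lebesgue (tri a b)"
    unfolding T'_def using isom_image[OF plane_isometry_reflect cT] by auto
  have un: "tri a b \<union> T' \<union> {} = cbox 0 (Complex a b)"
  proof -
    have "z \<in> cbox 0 (Complex a b)" if "z \<in> tri a b" for z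
      using tri_bounds[OF a b that] that by (auto simp: tri_def cbox_complex_eq)
    moreover have "z \<in> cbox 0 (Complex a b)"
      if z: "Re z \<le> a" "Im z \<le> b" "a * b \<le> Re z * b + Im z * a" for z
    proof -
      have "Im z * a \<le> b * a" "Re z * b \<le> a * b" using z a b by (auto intro: mult_right_mono)
      then have "0 \<le> Re z * b" "0 \<le> Im z * a" using z by (auto simp: algebra_simps)
      then have "0 \<le> Re z" "0 \<le> Im z" using a b by (auto simp: zero_le_mult_iff)
      then show ?thesis using z by (auto simp: cbox_complex_eq)
    qed
    moreover have "z \<in> tri a b \<or> (Re z \<le> a \<and> Im z \<le> b \<and> a * b \<le> Re z * b + Im z * a)"
      if "z \<in> cbox 0 (Complex a b)" for z
      using that by (auto simp: tri_def cbox_complex_eq)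
    ultimately show ?thesis
      unfolding T'_def refl_tri[OF a b] by blast
  qed
  have "tri a b \<inter> T' \<subseteq> {z. Complex b a \<bullet> z = a * b}"
    unfolding T'_def refl_tri[OF a b] by (auto simp: tri_def inner_complex_def algebra_simps)
  moreover have "negligible {z. Complex b a \<bullet> z = a * b}"
    using a by (intro negligible_hyperplane) (auto simp: complex_eq_iff)
  ultimately have neg: "negligible (tri a b \<inter> T')" by (rule negligible_subset[rotated])
  have "measure lebesgue (cbox 0 (Complex a b)) = measure lebesgue (tri a b) + measure lebesgue T' + measure lebesgue ({} :: complex set)"
  proof (rule measure_Un3_negligible)
    show "tri a b \<in> lmeasurable" "T' \<in> lmeasurable" using cT cT' by (auto intro: lmeasurable_compact)
    show "({} :: complex set) \<in> lmeasurable" by simp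
    show "negligible (tri a b \<inter> T')" by (rule neg)
    show "negligible (tri a b \<inter> {})" by (simp only: Int_empty_right negligible_empty)
    show "negligible (T' \<inter> {})" by (simp only: Int_empty_right negligible_empty)
    show "tri a b \<union> T' \<union> {} = cbox 0 (Complex a b)" by (rule un)
  qed
  moreover have "measure lebesgue (cbox 0 (Complex a b)) = a * b"
    using a b by (simp add: measure_lborel_cbox_eq Basis_complex_def)
  ultimately show ?thesis using mT' by simp
qed

lemma inter_frontier:
  assumes "closed A" "closed B" "interior A \<inter> interior B = {}"
  shows "A \<inter> B \<subseteq> frontier A \<union> frontier B"
  using assms by (auto simp: frontier_def closure_closed)

lemma area_count:
  assumes S: "rational_square S" and T: "almost_rational_right_triangle T"
    and D: "dissection S t N" and C: "\<forall>i<N. congruent_sets (t i) T"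
  shows "\<exists>s a b. s \<in> \<rat> \<and> s > 0 \<and> a > 0 \<and> b > 0 \<and> a \<in> \<rat> \<and> b \<in> \<rat> \<and>
        ((\<exists>c\<in>\<rat>. a^2 + 2*b^2 + 2*a*b = c^2) \<or> (\<exists>c\<in>\<rat>. a^2 + 2*b^2 - 2*a*b = c^2)) \<and>
        s^2 = real N * (a * b / 2)"
proof -
  obtain s f where s: "s \<in> \<rat>" "s > 0" and f: "plane_isometry f"
    and Seq: "S = f ` {z. 0 \<le> Re z \<and> Re z \<le> s \<and> 0 \<le> Im z \<and> Im z \<le> s}"
    using S unfolding rational_square_def by blast
  have Q: "{z. 0 \<le> Re z \<and> Re z \<le> s \<and> 0 \<le> Im z \<and> Im z \<le> s} = cbox 0 (Complex s s)"
    by (auto simp: cbox_complex_eq)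
  have mS: "measure lebesgue S = s^2"
    unfolding Seq Q using isom_image(2)[OF f compact_cbox] s
    by (simp add: measure_lborel_cbox_eq Basis_complex_def power2_eq_square)
  obtain a b g where ab: "a > 0" "b > 0" "a \<in> \<rat>" "b \<in> \<rat>"
    and cond: "(\<exists>c\<in>\<rat>. a^2 + 2*b^2 + 2*a*b = c^2) \<or> (\<exists>c\<in>\<rat>. a^2 + 2*b^2 - 2*a*b = c^2)"
    and g: "plane_isometry g" and Teq: "g ` tri a b = T"
    using T unfolding almost_rational_right_triangle_def congruent_sets_def
    by (metis hull_tri)
  have cT: "compact (tri a b)" using compact_tri ab by auto
  have cvT: "convex (tri a b)"
    using hull_tri[OF ab(1,2)] by (metis convex_convex_hull)
  have ti: "compact (t i) \<and> convex (t i) \<and> measure lebesgue (t i) = a * b / 2" if iN: "i < N" for i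
  proof -
    obtain h where h: "plane_isometry h" "h ` T = t i"
      using C iN unfolding congruent_sets_def by blast
    have "t i = (h \<circ> g) ` tri a b" using h Teq by (metis image_comp)
    then show ?thesis
      using isom_image[OF plane_isometry_comp[OF h(1) g] cT] cvT tri_area[OF ab(1,2)] by simp
  qed
  have "measure lebesgue (\<Union>(t ` {..<N})) = (\<Sum>i\<in>{..<N}. measure lebesgue (t i))"
  proof (rule measure_negligible_finite_Union_image)
    show "t i \<in> lmeasurable" if "i \<in> {..<N}" for i using ti that lmeasurable_compact by auto
    show "pairwise (\<lambda>i j. negligible (t i \<inter> t j)) {..<N}"
    proof (rule pairwiseI)
      fix i j assume ij: "i \<in> {..<N}" "j \<in> {..<N}" "i \<noteq> j"
      have "t i \<inter> t j \<subseteq> frontier (t i) \<union> frontier (t j)"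
        using ij ti D unfolding dissection_def by (intro inter_frontier) (auto intro: compact_imp_closed)
      moreover have "negligible (frontier (t i) \<union> frontier (t j))"
        using ij ti by (auto intro: negligible_convex_frontier)
      ultimately show "negligible (t i \<inter> t j)" by (rule negligible_subset[rotated])
    qed
  qed auto
  also have "\<dots> = (\<Sum>i\<in>{..<N}. a * b / 2)"
    by (rule sum.cong) (use ti in auto)
  also have "\<dots> = real N * (a * b / 2)" by simp
  finally have "s^2 = real N * (a * b / 2)"
    using D mS unfolding dissection_def by simp
  then show ?thesis using s ab cond by blast
qed

lemma alg_scale:
  fixes qa qb qs qc :: rat and n k :: nat and e :: rat
  assumes pos: "qa > 0" "qb > 0" "qs > 0" "n > 0" "k > 0" and e: "e = 1 \<or> e = -1"
    and sq: "qs^2 = of_nat n * of_nat k ^ 2 * qa * qb"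
    and c: "qa^2 + 2*qb^2 + e*2*qa*qb = qc^2"
  shows "\<exists>A B C::rat. A > 0 \<and> B > 0 \<and> C > 0 \<and> A * B = 2 * of_nat (2 * n) \<and> C^2 = A^2 + 2*B^2 + e*2*A*B"
proof -
  define L where "L = 2 * of_nat n * of_nat k / qs"
  have L: "L > 0" using pos by (simp add: L_def)
  have "qc^2 = (qa + e*qb)^2 + qb^2" using c e by (auto simp: power2_eq_square algebra_simps)
  moreover have "(qa + e*qb)^2 + qb^2 > 0" using pos by (simp add: add_nonneg_pos)
  ultimately have qc: "qc \<noteq> 0" by auto
  have "L^2 * (qa * qb) = 4 * of_nat n"
  proof -
    have "L^2 * (qa*qb) = 4 * of_nat n^2 * of_nat k^2 * (qa*qb) / qs^2"
      by (simp add: L_def power_divide power_mult_distrib)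
    also have "\<dots> = 4 * of_nat n" using sq pos by (simp add: power2_eq_square field_simps)
    finally show ?thesis .
  qed
  show ?thesis
  proof (intro exI conjI)
    show "L * qa > 0" "L * qb > 0" "L * \<bar>qc\<bar> > 0" using L pos qc by auto
    show "L * qa * (L * qb) = 2 * of_nat (2 * n)"
      using \<open>L^2 * (qa * qb) = 4 * of_nat n\<close> by (simp add: power2_eq_square algebra_simps)
    show "(L * \<bar>qc\<bar>)^2 = (L * qa)^2 + 2 * (L * qb)^2 + e * 2 * (L * qa) * (L * qb)"
      using arg_cong[OF c, of "\<lambda>x. L^2 * x"] by (simp add: power_mult_distrib power2_eq_square algebra_simps)
  qed
qed




definition piece :: "real \<Rightarrow> real \<Rightarrow> nat \<Rightarrow> nat \<Rightarrow> nat \<Rightarrow> complex set" where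
  "piece a b j l r = (if r = 0 then (\<lambda>z. z + Complex (real j * a) (real l * b)) ` tri a b
     else (\<lambda>z. Complex ((real j + 1) * a) ((real l + 1) * b) - z) ` tri a b)"

lemma mem_transl: "(z::complex) \<in> (\<lambda>w. w + c) ` T \<longleftrightarrow> z - c \<in> T"
proof
  assume "z \<in> (\<lambda>w. w + c) ` T"
  then obtain w where "w \<in> T" "z = w + c" by blast
  then show "z - c \<in> T" by simp
next
  assume "z - c \<in> T"
  then show "z \<in> (\<lambda>w. w + c) ` T" by (intro image_eqI[of z _ "z - c"]) simp_all
qed

lemma mem_refl: "(z::complex) \<in> (\<lambda>w. c - w) ` T \<longleftrightarrow> c - z \<in> T"
proof
  assume "z \<in> (\<lambda>w. c - w) ` T"
  then obtain w where "w \<in> T" "z = c - w" by blast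
  then show "c - z \<in> T" by simp
next
  assume "c - z \<in> T"
  then show "z \<in> (\<lambda>w. c - w) ` T" by (intro image_eqI[of z _ "c - z"]) simp_all
qed

lemma piece_mem:
  assumes a: "a > 0" and b: "b > 0"
  shows "z \<in> piece a b j l r \<longleftrightarrow>
    (real j * a \<le> Re z \<and> Re z \<le> (real j + 1) * a \<and> real l * b \<le> Im z \<and> Im z \<le> (real l + 1) * b \<and>
     (if r = 0 then (Re z - real j * a) * b + (Im z - real l * b) * a \<le> a * b
      else a * b \<le> (Re z - real j * a) * b + (Im z - real l * b) * a))" (is "_ \<longleftrightarrow> ?R")
proof (cases "r = 0")
  case True
  define w where "w = z - Complex (real j * a) (real l * b)"
  have Rw: "Re w = Re z - real j * a" "Im w = Im z - real l * b" by (simp_all add: w_def)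
  have "z \<in> piece a b j l r \<longleftrightarrow> w \<in> tri a b"
    using True by (simp add: piece_def mem_transl w_def)
  also have "\<dots> \<longleftrightarrow> ?R"
  proof
    assume h: "w \<in> tri a b"
    have "Re w \<le> a" "Im w \<le> b" using tri_bounds[OF a b h] by auto
    moreover have "0 \<le> Re w" "0 \<le> Im w" "Re w * b + Im w * a \<le> a * b" using h by (auto simp: tri_def)
    ultimately show ?R using True unfolding Rw by (simp add: ring_distribs)
  next
    assume ?R
    then show "w \<in> tri a b" using True unfolding tri_def by (simp add: Rw)
  qed
  finally show ?thesis .
next
  case False
  define w where "w = Complex ((real j + 1) * a) ((real l + 1) * b) - z"
  have Rw: "Re w = (real j + 1) * a - Re z" "Im w = (real l + 1) * b - Im z" by (simp_all add: w_def)
  have key: "Re w * b + Im w * a \<le> a * b \<longleftrightarrow> a * b \<le> (Re z - real j * a) * b + (Im z - real l * b) * a"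
    unfolding Rw by (simp add: algebra_simps)
  have "z \<in> piece a b j l r \<longleftrightarrow> w \<in> tri a b"
    using False by (simp add: piece_def mem_refl w_def)
  also have "\<dots> \<longleftrightarrow> ?R"
  proof
    assume h: "w \<in> tri a b"
    have "Re w \<le> a" "Im w \<le> b" using tri_bounds[OF a b h] by auto
    moreover have "0 \<le> Re w" "0 \<le> Im w" "Re w * b + Im w * a \<le> a * b" using h by (auto simp: tri_def)
    ultimately show ?R using False key unfolding Rw by (simp add: ring_distribs)
  next
    assume ?R
    then show "w \<in> tri a b" using False key unfolding tri_def by (simp add: Rw ring_distribs)
  qed
  finally show ?thesis .
qed

lemma piece_congruent: "congruent_sets (piece a b j l r) (tri a b)"
  unfolding congruent_sets_def piece_def
  using plane_isometry_translate plane_isometry_reflect by auto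

lemma sep_interior:
  fixes A B :: "complex set"
  assumes "w \<noteq> 0" "\<And>z. z \<in> A \<Longrightarrow> w \<bullet> z \<le> c" "\<And>z. z \<in> B \<Longrightarrow> w \<bullet> z \<ge> c"
  shows "interior A \<inter> interior B = {}"
proof -
  have "A \<inter> B \<subseteq> {z. w \<bullet> z = c}" using assms by force
  then have "interior (A \<inter> B) \<subseteq> interior {z. w \<bullet> z = c}" by (rule interior_mono)
  then show ?thesis using assms(1) by (simp add: interior_Int)
qed

lemma step_le: "(j::nat) < j' \<Longrightarrow> (a::real) > 0 \<Longrightarrow> (real j + 1) * a \<le> real j' * a"
  by (intro mult_right_mono) auto

lemma piece_disjoint:
  assumes a: "a > 0" and b: "b > 0" and r: "r < 2" "r' < 2" and ne: "(j, l, r) \<noteq> (j', l', r')"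
  shows "interior (piece a b j l r) \<inter> interior (piece a b j' l' r') = {}"
proof -
  have X: "interior (piece a b j l r) \<inter> interior (piece a b j' l' r') = {}"
    if "j < j'" for j l r j' l' r'
    by (rule sep_interior[of 1 _ "(real j + 1) * a"])
       (use step_le[OF that a] in \<open>auto simp: piece_mem[OF a b]\<close>)
  have Y: "interior (piece a b j l r) \<inter> interior (piece a b j l' r') = {}"
    if "l < l'" for j l r l' r'
    by (rule sep_interior[of \<i> _ "(real l + 1) * b"])
       (use step_le[OF that b] in \<open>auto simp: piece_mem[OF a b]\<close>)
  have Z: "interior (piece a b j l 0) \<inter> interior (piece a b j l 1) = {}"
    by (rule sep_interior[of "Complex b a" _ "a * b + real j * a * b + real l * b * a"])
       (use a in \<open>auto simp: piece_mem[OF a b] inner_complex_def algebra_simps complex_eq_iff\<close>)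
  show ?thesis
  proof (cases "j = j'")
    case False
    then show ?thesis using X[of j j'] X[of j' j] by (cases "j < j'") (auto simp: Int_commute)
  next
    case jj: True
    show ?thesis
    proof (cases "l = l'")
      case False
      then show ?thesis using jj Y[of l l'] Y[of l' l] by (cases "l < l'") (auto simp: Int_commute)
    next
      case True
      with jj ne r have "(r = 0 \<and> r' = 1) \<or> (r = 1 \<and> r' = 0)" by auto
      then show ?thesis using jj True Z by (auto simp: Int_commute)
    qed
  qed
qed

lemma cell:
  assumes a: "a > 0" and M: "M > 0" and x: "0 \<le> x" "x \<le> real M * a"
  shows "\<exists>j<M. real j * a \<le> x \<and> x \<le> (real j + 1) * a"
proof -
  define k where "k = nat \<lfloor>x / a\<rfloor>"
  have k1: "real k \<le> x / a" using x a by (simp add: k_def)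
  have k2: "x / a < real k + 1" using x a by (simp add: k_def)
  have k1': "real k * a \<le> x" using k1 a by (simp add: field_simps)
  have k2': "x < (real k + 1) * a" using k2 a by (simp add: field_simps)
  show ?thesis
  proof (cases "k < M")
    case True
    then show ?thesis using k1' k2' by (intro exI[of _ k]) auto
  next
    case False
    then have "real M \<le> real k" by simp
    then have "real M * a \<le> real k * a" using a by (intro mult_right_mono) auto
    then have xe: "x = real M * a" using x k1' by linarith
    have "real (M - 1) + 1 = real M" using M by simp
    then show ?thesis using M xe a by (intro exI[of _ "M - 1"]) (auto simp: algebra_simps)
  qed
qed




lemma decode_eq:
  fixes M1 i i' :: nat
  assumes "i div 2 mod M1 = i' div 2 mod M1" "i div 2 div M1 = i' div 2 div M1" "i mod 2 = i' mod 2"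
  shows "i = i'"
proof -
  have "i div 2 = i' div 2" using assms(1,2) by (metis div_mult_mod_eq)
  then show ?thesis using assms(3) by (metis div_mult_mod_eq)
qed

lemma tiling:
  assumes a: "a > 0" and b: "b > 0" and M1: "M1 > 0" and M2: "M2 > 0"
    and s1: "real M1 * a = s" and s2: "real M2 * b = s"
  shows "dissection (cbox 0 (Complex s s))
           (\<lambda>i. piece a b (i div 2 mod M1) (i div 2 div M1) (i mod 2)) (2 * M1 * M2)"
proof -
  define t where "t = (\<lambda>i. piece a b (i div 2 mod M1) (i div 2 div M1) (i mod 2))"
  have bnd: "i div 2 mod M1 < M1 \<and> i div 2 div M1 < M2" if "i < 2 * M1 * M2" for i
  proof
    show "i div 2 mod M1 < M1" using M1 by simp
    have "i < (M2 * M1) * 2" using that by (simp add: algebra_simps)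
    then have "i div 2 < M2 * M1" by (rule less_mult_imp_div_less)
    then show "i div 2 div M1 < M2" by (simp add: less_mult_imp_div_less)
  qed
  have sub1: "t i \<subseteq> cbox 0 (Complex s s)" if i: "i < 2 * M1 * M2" for i
  proof
    fix z assume z: "z \<in> t i"
    define j where "j = i div 2 mod M1"
    define l where "l = i div 2 div M1"
    have jl: "j < M1" "l < M2" using bnd[OF i] by (auto simp: j_def l_def)
    have zz: "real j * a \<le> Re z" "Re z \<le> (real j + 1) * a" "real l * b \<le> Im z" "Im z \<le> (real l + 1) * b"
      using z unfolding t_def j_def[symmetric] l_def[symmetric] piece_mem[OF a b] by auto
    have "(real j + 1) * a \<le> real M1 * a" "(real l + 1) * b \<le> real M2 * b"
      using jl a b by (auto intro!: mult_right_mono)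
    moreover have "0 \<le> real j * a" "0 \<le> real l * b" using a b by auto
    ultimately show "z \<in> cbox 0 (Complex s s)"
      using zz s1 s2 by (auto simp: cbox_complex_eq)
  qed
  have sub2: "z \<in> (\<Union>i<2 * M1 * M2. t i)" if z: "z \<in> cbox 0 (Complex s s)" for z
  proof -
    have zr: "0 \<le> Re z" "Re z \<le> real M1 * a" "0 \<le> Im z" "Im z \<le> real M2 * b"
      using z s1 s2 by (auto simp: cbox_complex_eq)
    obtain j where j: "j < M1" "real j * a \<le> Re z" "Re z \<le> (real j + 1) * a"
      using cell[OF a M1 zr(1,2)] by blast
    obtain l where l: "l < M2" "real l * b \<le> Im z" "Im z \<le> (real l + 1) * b"
      using cell[OF b M2 zr(3,4)] by blast
    define r where "r = (if (Re z - real j * a) * b + (Im z - real l * b) * a \<le> a * b then 0 else 1::nat)"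
    define i where "i = 2 * (l * M1 + j) + r"
    have r2: "r < 2" by (simp add: r_def)
    have d1: "i mod 2 = r" "i div 2 = l * M1 + j" using r2 unfolding i_def by presburger+
    have d2: "i div 2 mod M1 = j" "i div 2 div M1 = l" using j(1) by (auto simp: d1)
    have "l * M1 + j < M2 * M1"
    proof -
      have "l * M1 + j < l * M1 + M1" using j(1) by simp
      also have "\<dots> = Suc l * M1" by simp
      also have "\<dots> \<le> M2 * M1" using l(1) by (intro mult_right_mono) auto
      finally show ?thesis .
    qed
    then have iN: "i < 2 * M1 * M2" using r2 by (simp add: i_def algebra_simps)
    have "z \<in> t i"
      unfolding t_def d1 d2 piece_mem[OF a b] using j l by (auto simp: r_def)
    then show ?thesis using iN by blast
  qed
  have disj: "interior (t i) \<inter> interior (t i') = {}"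
    if "i < 2 * M1 * M2" "i' < 2 * M1 * M2" "i \<noteq> i'" for i i'
    unfolding t_def
  proof (rule piece_disjoint[OF a b])
    show "i mod 2 < 2" "i' mod 2 < 2" by auto
    show "(i div 2 mod M1, i div 2 div M1, i mod 2) \<noteq> (i' div 2 mod M1, i' div 2 div M1, i' mod 2)"
      using decode_eq[of i M1 i'] that(3) by auto
  qed
  have "(\<Union>i<2 * M1 * M2. t i) = cbox 0 (Complex s s)"
    using sub1 sub2 by blast
  then show ?thesis using disj unfolding dissection_def t_def by blast
qed




lemma rat_real_cond:
  fixes a b c :: real and e :: rat
  assumes "a \<in> \<rat>" "b \<in> \<rat>" "c \<in> \<rat>" "a > 0" "b > 0" "s \<in> \<rat>" "s > 0"
    and n: "n > 0" and k: "k > 0"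
    and area: "s^2 = real (2 * n * k^2) * (a * b / 2)"
    and eq: "a^2 + 2*b^2 + of_rat e * 2*a*b = c^2" and e: "e = 1 \<or> e = -1"
  shows "\<exists>A B C::rat. A > 0 \<and> B > 0 \<and> C > 0 \<and> A * B = 2 * of_nat (2 * n) \<and> C^2 = A^2 + 2*B^2 + e*2*A*B"
proof -
  obtain qa where qa: "a = of_rat qa" using assms(1) by (auto elim: Rats_cases)
  obtain qb where qb: "b = of_rat qb" using assms(2) by (auto elim: Rats_cases)
  obtain qc where qc: "c = of_rat qc" using assms(3) by (auto elim: Rats_cases)
  obtain qs where qs: "s = of_rat qs" using assms(6) by (auto elim: Rats_cases)
  have pos: "qa > 0" "qb > 0" "qs > 0" using assms(4,5,7) qa qb qs by auto
  have "(of_rat (qs^2) :: real) = of_rat (of_nat n * of_nat k ^ 2 * qa * qb)"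
    using area unfolding qa qb qs by (simp add: of_rat_mult of_rat_power)
  then have sq: "qs^2 = of_nat n * of_nat k ^ 2 * qa * qb" by (simp only: of_rat_eq_iff)
  have "(of_rat (qa^2 + 2*qb^2 + e*2*qa*qb) :: real) = of_rat (qc^2)"
    using eq unfolding qa qb qc by (simp add: of_rat_mult of_rat_power of_rat_add)
  then have c: "qa^2 + 2*qb^2 + e*2*qa*qb = qc^2" by (simp only: of_rat_eq_iff)
  show ?thesis by (rule alg_scale[OF pos n k e sq c])
qed

theorem proposition7p2:
  fixes n :: nat
  assumes "n > 0" and "odd n" and "squarefree n"
  shows "(\<exists>k::nat. k > 0 \<and>
            (\<exists>S t T. rational_square S \<and> almost_rational_right_triangle T \<and>
               dissection S t (2 * n * k^2) \<and>
               (\<forall>i < 2 * n * k^2. congruent_sets (t i) T)))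
         \<longleftrightarrow> (pi4_congruent (2 * n) \<or> three_pi4_congruent (2 * n))"
proof
  assume "\<exists>k::nat. k > 0 \<and>
            (\<exists>S t T. rational_square S \<and> almost_rational_right_triangle T \<and>
               dissection S t (2 * n * k^2) \<and>
               (\<forall>i < 2 * n * k^2. congruent_sets (t i) T))"
  then obtain k S t T where k: "k > 0" and S: "rational_square S" and T: "almost_rational_right_triangle T"
    and D: "dissection S t (2 * n * k^2)" and C: "\<forall>i < 2 * n * k^2. congruent_sets (t i) T"
    by blast
  obtain s a b where sab: "s \<in> \<rat>" "s > 0" "a > 0" "b > 0" "a \<in> \<rat>" "b \<in> \<rat>"
    and cond: "(\<exists>c\<in>\<rat>. a^2 + 2*b^2 + 2*a*b = c^2) \<or> (\<exists>c\<in>\<rat>. a^2 + 2*b^2 - 2*a*b = c^2)"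
    and area: "s^2 = real (2 * n * k^2) * (a * b / 2)"
    using area_count[OF S T D C] by blast
  from cond show "pi4_congruent (2 * n) \<or> three_pi4_congruent (2 * n)"
  proof
    assume "\<exists>c\<in>\<rat>. a^2 + 2*b^2 + 2*a*b = c^2"
    then obtain c where c: "c \<in> \<rat>" "a^2 + 2*b^2 + of_rat 1 * 2*a*b = c^2" by auto
    from rat_real_cond[OF sab(5,6) c(1) sab(3,4,1,2) assms(1) k area c(2)]
    have "three_pi4_congruent (2 * n)" unfolding three_pi4_congruent_def by auto
    then show ?thesis by blast
  next
    assume "\<exists>c\<in>\<rat>. a^2 + 2*b^2 - 2*a*b = c^2"
    then obtain c where c: "c \<in> \<rat>" "a^2 + 2*b^2 + of_rat (-1) * 2*a*b = c^2" by auto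
    from rat_real_cond[OF sab(5,6) c(1) sab(3,4,1,2) assms(1) k area c(2)]
    have "pi4_congruent (2 * n)" unfolding pi4_congruent_def by auto
    then show ?thesis by blast
  qed
next
  assume R: "pi4_congruent (2 * n) \<or> three_pi4_congruent (2 * n)"
  obtain A B C :: rat where AB: "A > 0" "B > 0" "C > 0" "A * B = 2 * of_nat (2 * n)"
    and cond: "(\<exists>c\<in>\<rat>. (of_rat A)^2 + 2*(of_rat B)^2 + 2*(of_rat A)*(of_rat B) = (c::real)^2) \<or>
               (\<exists>c\<in>\<rat>. (of_rat A)^2 + 2*(of_rat B)^2 - 2*(of_rat A)*(of_rat B) = (c::real)^2)"
  proof -
    from R show thesis
    proof
      assume "pi4_congruent (2 * n)"
      then obtain A B C :: rat where h: "A > 0" "B > 0" "C > 0" "A * B = 2 * of_nat (2 * n)"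
        "C^2 = A^2 + 2*B^2 - 2*A*B" unfolding pi4_congruent_def by blast
      have "(of_rat C :: real)^2 = (of_rat A)^2 + 2*(of_rat B)^2 - 2*(of_rat A)*(of_rat B)"
        using arg_cong[OF h(5), of "of_rat :: rat \<Rightarrow> real"] by (simp add: of_rat_mult of_rat_power of_rat_add of_rat_diff)
      then show thesis using h by (intro that[OF h(1-4)]) (auto intro!: bexI[of _ "of_rat C"])
    next
      assume "three_pi4_congruent (2 * n)"
      then obtain A B C :: rat where h: "A > 0" "B > 0" "C > 0" "A * B = 2 * of_nat (2 * n)"
        "C^2 = A^2 + 2*B^2 + 2*A*B" unfolding three_pi4_congruent_def by blast
      have "(of_rat C :: real)^2 = (of_rat A)^2 + 2*(of_rat B)^2 + 2*(of_rat A)*(of_rat B)"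
        using arg_cong[OF h(5), of "of_rat :: rat \<Rightarrow> real"] by (simp add: of_rat_mult of_rat_power of_rat_add)
      then show thesis using h by (intro that[OF h(1-4)]) (auto intro!: bexI[of _ "of_rat C"])
    qed
  qed
  obtain p1 q1 where pq1: "quotient_of A = (p1, q1)" by (cases "quotient_of A") auto
  obtain p2 q2 where pq2: "quotient_of B = (p2, q2)" by (cases "quotient_of B") auto
  have q1: "q1 > 0" using pq1 by (rule quotient_of_denom_pos)
  have q2: "q2 > 0" using pq2 by (rule quotient_of_denom_pos)
  have A: "A = of_int p1 / of_int q1" using pq1 by (rule quotient_of_div)
  have B: "B = of_int p2 / of_int q2" using pq2 by (rule quotient_of_div)
  have p1: "p1 > 0" using AB(1) q1 unfolding A by (simp add: zero_less_divide_iff)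
  have p2: "p2 > 0" using AB(2) q2 unfolding B by (simp add: zero_less_divide_iff)
  have "(of_int (p1 * p2) :: rat) = of_int (4 * int n * q1 * q2)"
    using AB(4) q1 q2 unfolding A B by (simp add: field_simps)
  then have pp: "p1 * p2 = 4 * int n * q1 * q2" by (simp only: of_int_eq_iff)
  define a where "a = (of_rat A :: real)"
  define b where "b = (of_rat B :: real)"
  have a: "a = of_int p1 / of_int q1" unfolding a_def A by (simp add: of_rat_divide)
  have b: "b = of_int p2 / of_int q2" unfolding b_def B by (simp add: of_rat_divide)
  have apos: "a > 0" "b > 0" using AB by (auto simp: a_def b_def)
  define k where "k = nat (p1 * p2)"
  define M1 where "M1 = nat (2 * int n * p2 * q1)"
  define M2 where "M2 = nat (2 * int n * p1 * q2)"
  define s where "s = real (2 * n * k)"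
  have kpos: "k > 0" using p1 p2 by (simp add: k_def)
  have M1pos: "M1 > 0" using p2 q1 assms(1) by (simp add: M1_def)
  have M2pos: "M2 > 0" using p1 q2 assms(1) by (simp add: M2_def)
  have ik: "int k = p1 * p2" using p1 p2 by (simp add: k_def)
  have iM1: "int M1 = 2 * int n * p2 * q1" using p2 q1 by (simp add: M1_def)
  have iM2: "int M2 = 2 * int n * p1 * q2" using p1 q2 by (simp add: M2_def)
  have s1: "real M1 * a = s"
  proof -
    have "real M1 = of_int (2 * int n * p2 * q1)" using arg_cong[OF iM1, of "of_int :: int \<Rightarrow> real"] by simp
    moreover have "s = of_int (2 * int n * (p1 * p2))" unfolding s_def using arg_cong[OF ik, of "of_int :: int \<Rightarrow> real"] by simp
    ultimately show ?thesis using q1 unfolding a by (simp add: field_simps)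
  qed
  have s2: "real M2 * b = s"
  proof -
    have "real M2 = of_int (2 * int n * p1 * q2)" using arg_cong[OF iM2, of "of_int :: int \<Rightarrow> real"] by simp
    moreover have "s = of_int (2 * int n * (p1 * p2))" unfolding s_def using arg_cong[OF ik, of "of_int :: int \<Rightarrow> real"] by simp
    ultimately show ?thesis using q2 unfolding b by (simp add: field_simps)
  qed
  have NN: "2 * M1 * M2 = 2 * n * k^2"
  proof -
    have "int (2 * M1 * M2) = 2 * (2 * int n * p2 * q1) * (2 * int n * p1 * q2)" using iM1 iM2 by simp
    also have "\<dots> = 2 * int n * (p1 * p2) * (4 * int n * q1 * q2)" by (simp add: algebra_simps)
    also have "\<dots> = int (2 * n * k^2)" unfolding pp[symmetric] using ik by (simp add: power2_eq_square)
    finally show ?thesis by (simp only: of_nat_eq_iff)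
  qed
  define t where "t = (\<lambda>i. piece a b (i div 2 mod M1) (i div 2 div M1) (i mod 2))"
  have D: "dissection (cbox 0 (Complex s s)) t (2 * n * k^2)"
    using tiling[OF apos M1pos M2pos s1 s2] unfolding t_def NN .
  have RS: "rational_square (cbox 0 (Complex s s))"
    unfolding rational_square_def
  proof (intro exI conjI)
    show "s \<in> \<rat>" by (simp add: s_def)
    show "s > 0" using kpos assms(1) by (simp add: s_def)
    show "plane_isometry id" by (rule plane_isometry_id)
    show "cbox 0 (Complex s s) = id ` {z. 0 \<le> Re z \<and> Re z \<le> s \<and> 0 \<le> Im z \<and> Im z \<le> s}"
      by (auto simp: cbox_complex_eq)
  qed
  have AT: "almost_rational_right_triangle (tri a b)"
    unfolding almost_rational_right_triangle_def
  proof (intro exI conjI)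
    show "a > 0" "b > 0" by (rule apos(1), rule apos(2))
    show "a \<in> \<rat>" "b \<in> \<rat>" by (simp_all add: a_def b_def)
    show "(\<exists>c\<in>\<rat>. a^2 + 2*b^2 + 2*a*b = c^2) \<or> (\<exists>c\<in>\<rat>. a^2 + 2*b^2 - 2*a*b = c^2)"
      using cond by (simp add: a_def b_def)
    show "congruent_sets (tri a b) (convex hull {0, complex_of_real a, \<i> * complex_of_real b})"
      unfolding congruent_sets_def hull_tri[OF apos]
      by (intro exI[of _ id]) (simp add: plane_isometry_id)
  qed
  have CC: "\<forall>i < 2 * n * k^2. congruent_sets (t i) (tri a b)"
    by (simp add: t_def piece_congruent)
  show "\<exists>k::nat. k > 0 \<and>
            (\<exists>S t T. rational_square S \<and> almost_rational_right_triangle T \<and>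
               dissection S t (2 * n * k^2) \<and>
               (\<forall>i < 2 * n * k^2. congruent_sets (t i) T))"
    using kpos RS AT D CC by blast
qed


end
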